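(* For every $n\ge 2$, every symmetric pseudo-Boolean function of $n$ variables has a $y$-linear quadratization involving at most $n-2$ auxiliary variables.
   Context: A pseudo-Boolean function is a map $f:\{0,1\}^n\to\mathbb{R}$; it is symmetric if its value depends only on the Hamming weight $\sum_j x_j$. A quadratization of $f$ using $m$ auxiliary variables is a polynomial $g(x,y)$ of degree at most $2$ in $x_1,\ldots,x_n,y_1,\ldots,y_m$ such that $f(x)=\min\{g(x,y):y\in\{0,1\}^m\}$ for all $x\in\{0,1\}^n$. It is $y$-linear if it contains no product of two auxiliary variables, i.e. $g(x,y)=q(x)+\sum_{i=1}^m a_i(x)y_i$ with $q$ quadratic and each $a_i$ affine in $x$. *)

theory Defs
  imports Complex_Main
begin

definition bvecs :: "nat \<Rightarrow> (nat \<Rightarrow> real) set" where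
  "bvecs n = {x. (\<forall>j<n. x j \<in> {0, 1}) \<and> (\<forall>j\<ge>n. x j = 0)}"

text \<open>A pseudo-Boolean function of n variables is f restricted to bvecs n.
  It is symmetric if its value depends only on the Hamming weight.\<close>
definition symmetric_pbf :: "nat \<Rightarrow> ((nat \<Rightarrow> real) \<Rightarrow> real) \<Rightarrow> bool" where
  "symmetric_pbf n f \<longleftrightarrow>
     (\<forall>x\<in>bvecs n. \<forall>x'\<in>bvecs n. (\<Sum>j<n. x j) = (\<Sum>j<n. x' j) \<longrightarrow> f x = f x')"

text \<open>A general y-linear polynomial g(x,y) = q(x) + sum_i a_i(x) y_i, with q quadratic in x
  and each a_i affine in x.\<close>
definition ylin_poly ::
  "nat \<Rightarrow> nat \<Rightarrow> real \<Rightarrow> (nat \<Rightarrow> real) \<Rightarrow> (nat \<Rightarrow> nat \<Rightarrow> real) \<Rightarrow>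
   (nat \<Rightarrow> real) \<Rightarrow> (nat \<Rightarrow> nat \<Rightarrow> real) \<Rightarrow> (nat \<Rightarrow> real) \<Rightarrow> (nat \<Rightarrow> real) \<Rightarrow> real" where
  "ylin_poly n m c l Q \<alpha> \<beta> x y =
     c + (\<Sum>i<n. l i * x i) + (\<Sum>i<n. \<Sum>j<n. Q i j * x i * x j)
     + (\<Sum>k<m. (\<alpha> k + (\<Sum>i<n. \<beta> k i * x i)) * y k)"

definition has_ylinear_quadratization :: "nat \<Rightarrow> nat \<Rightarrow> ((nat \<Rightarrow> real) \<Rightarrow> real) \<Rightarrow> bool" where
  "has_ylinear_quadratization n m f \<longleftrightarrow>
     (\<exists>c l Q \<alpha> \<beta>. \<forall>x\<in>bvecs n.
        f x = Min ((\<lambda>y. ylin_poly n m c l Q \<alpha> \<beta> x y) ` bvecs m))"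

end

theory Submission
  imports Defs "HOL-Library.FuncSet"
begin

definition relu :: "real \<Rightarrow> real" where "relu z = max 0 z"

lemma relu_2diff:
  fixes w t :: nat
  shows "relu (real (w+2) - real t) - 2 * relu (real (w+1) - real t) + relu (real w - real t)
         = (if t = w+1 then 1 else 0)"
proof -
  consider "t \<le> w" | "t = w+1" | "t \<ge> w+2" by linarith
  then show ?thesis
  proof cases
    case 1 then show ?thesis by (simp add: relu_def)
  next
    case 2 then show ?thesis by (simp add: relu_def)
  next
    case 3 then have "real t \<ge> real w + 2" by linarith
    then show ?thesis by (simp add: relu_def)
  qed
qed

lemma oneD:
  fixes F :: "nat \<Rightarrow> real" and n :: nat
  assumes "n \<ge> 2"
  shows "\<exists>A B C \<alpha> \<beta>. \<forall>w\<le>n. F w = A + B * real w + C * (real w)^2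
            + (\<Sum>k<n-2. min 0 (\<alpha> k + \<beta> k * real w))"
proof -
  define D where "D t = F (t+1) - 2 * F t + F (t-1)" for t
  have fin: "finite {1..n-1}" and ne: "{1..n-1} \<noteq> {}" using assms by auto
  define M where "M = Max (D ` {1..n-1})"
  have "M \<in> D ` {1..n-1}" unfolding M_def using fin ne by (intro Max_in) auto
  then obtain p where p: "p \<in> {1..n-1}" "D p = M" by auto
  have pmax: "D t \<le> D p" if "t \<in> {1..n-1}" for t
    unfolding p(2) M_def using fin that by (intro Max_ge) auto
  define C where "C = D p / 2"
  define lam where "lam t = D p - D t" for t
  define A where "A = F 0"
  define B where "B = F 1 - F 0 - C"
  define G where "G w = A + B * real w + C * (real w)^2
      - (\<Sum>t\<in>{1..n-1}. lam t * relu (real w - real t))" for w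
  have G0: "G 0 = F 0"
  proof -
    have "(\<Sum>t\<in>{1..n-1}. lam t * relu (real 0 - real t)) = 0"
      by (rule sum.neutral) (auto simp: relu_def)
    then show ?thesis unfolding G_def A_def by simp
  qed
  have G1: "G 1 = F 1"
  proof -
    have "(\<Sum>t\<in>{1..n-1}. lam t * relu (real 1 - real t)) = 0"
      by (rule sum.neutral) (auto simp: relu_def)
    then show ?thesis unfolding G_def A_def B_def by simp
  qed
  have step: "G (w+2) = 2 * G (w+1) - G w + D (w+1)" if "w + 2 \<le> n" for w
  proof -
    have "(\<Sum>t\<in>{1..n-1}. lam t * relu (real (w+2) - real t))
        - 2 * (\<Sum>t\<in>{1..n-1}. lam t * relu (real (w+1) - real t))
        + (\<Sum>t\<in>{1..n-1}. lam t * relu (real w - real t))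
        = (\<Sum>t\<in>{1..n-1}. lam t * (relu (real (w+2) - real t) - 2 * relu (real (w+1) - real t)
             + relu (real w - real t)))"
      by (simp add: sum_subtractf sum.distrib sum_distrib_left algebra_simps)
    also have "\<dots> = (\<Sum>t\<in>{1..n-1}. if t = w+1 then lam t else 0)"
    proof (rule sum.cong)
      fix t assume "t \<in> {1..n-1}"
      show "lam t * (relu (real (w+2) - real t) - 2 * relu (real (w+1) - real t)
             + relu (real w - real t)) = (if t = w+1 then lam t else 0)"
        using relu_2diff[of w t] by (simp only:) simp
    qed simp
    also have "\<dots> = lam (w+1)" using that by (subst sum.delta) auto
    finally have S: "(\<Sum>t\<in>{1..n-1}. lam t * relu (real (w+2) - real t))
        = 2 * (\<Sum>t\<in>{1..n-1}. lam t * relu (real (w+1) - real t))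
        - (\<Sum>t\<in>{1..n-1}. lam t * relu (real w - real t)) + lam (w+1)" by linarith
    have L: "lam (w+1) = 2 * C - D (w+1)" unfolding lam_def C_def by simp
    show ?thesis unfolding G_def S L
      by (simp add: algebra_simps power2_eq_square)
  qed
  have main: "w+1 \<le> n \<longrightarrow> F w = G w \<and> F (w+1) = G (w+1)" for w
  proof (induction w)
    case 0 then show ?case using G0 G1 by simp
  next
    case (Suc w)
    show ?case
    proof
      assume a: "Suc w + 1 \<le> n"
      then have IH: "F w = G w" "F (w+1) = G (w+1)" using Suc by auto
      have "F (w+2) = 2 * F (w+1) - F w + D (w+1)" unfolding D_def by simp
      then have "F (w+2) = G (w+2)" using step[of w] a IH by simp
      then show "F (Suc w) = G (Suc w) \<and> F (Suc w + 1) = G (Suc w + 1)" using IH by simp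
    qed
  qed
  have FG: "F w = G w" if "w \<le> n" for w
  proof (cases w)
    case 0 then show ?thesis using main[of 0] assms by simp
  next
    case (Suc v) then show ?thesis using main[of v] that by simp
  qed
  define tk where "tk k = (if k+1 < p then k+1 else k+2)" for k
  define ti where "ti t = (if t < p then t-1 else t-2)" for t
  have bij: "bij_betw tk {..<n-2} ({1..n-1} - {p})"
    by (rule bij_betw_byWitness[where f'=ti]) (use p in \<open>auto simp: tk_def ti_def\<close>)
  have lam_nn: "lam t \<ge> 0" if "t \<in> {1..n-1}" for t using pmax[OF that] unfolding lam_def by simp
  define \<alpha> where "\<alpha> k = lam (tk k) * real (tk k)" for k
  define \<beta> where "\<beta> k = - lam (tk k)" for k
  have hinge: "(\<Sum>k<n-2. min 0 (\<alpha> k + \<beta> k * real w))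
      = - (\<Sum>t\<in>{1..n-1}. lam t * relu (real w - real t))" for w
  proof -
    define h where "h t = - lam t * relu (real w - real t)" for t
    have "(\<Sum>k<n-2. min 0 (\<alpha> k + \<beta> k * real w)) = (\<Sum>k<n-2. h (tk k))"
    proof (rule sum.cong)
      fix k assume "k \<in> {..<n-2}"
      then have "tk k \<in> {1..n-1}" using bij by (auto dest: bij_betwE)
      then have l: "lam (tk k) \<ge> 0" by (rule lam_nn)
      show "min 0 (\<alpha> k + \<beta> k * real w) = h (tk k)"
      proof (cases "real w \<le> real (tk k)")
        case True
        then have "lam (tk k) * real (tk k) - lam (tk k) * real w \<ge> 0"
          using l by (simp add: right_diff_distrib[symmetric])
        then show ?thesis using True unfolding h_def \<alpha>_def \<beta>_def relu_def by simp
      next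
        case False
        then have "lam (tk k) * real (tk k) - lam (tk k) * real w \<le> 0"
          using l by (simp add: right_diff_distrib[symmetric] mult_nonneg_nonpos)
        then show ?thesis using False unfolding h_def \<alpha>_def \<beta>_def relu_def
          by (simp add: algebra_simps)
      qed
    qed simp
    also have "\<dots> = (\<Sum>t\<in>{1..n-1} - {p}. h t)"
      using sum.reindex_bij_betw[OF bij, of h] by simp
    also have "\<dots> = (\<Sum>t\<in>{1..n-1}. h t) - h p"
      using p(1) by (simp add: sum_diff1)
    also have "h p = 0" unfolding h_def lam_def by simp
    finally show ?thesis unfolding h_def by (simp add: sum_negf)
  qed
  show ?thesis
    apply (rule exI[of _ A], rule exI[of _ B], rule exI[of _ C], rule exI[of _ \<alpha>], rule exI[of _ \<beta>])
    using FG hinge unfolding G_def by simp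
qed

lemma bvecs_finite: "finite (bvecs m)"
proof -
  have "bvecs m \<subseteq> (\<lambda>g j. if j < m then g j else 0) ` (PiE {..<m} (\<lambda>_. {0,1::real}))"
  proof
    fix y assume y: "y \<in> bvecs m"
    have "y = (\<lambda>j. if j < m then restrict y {..<m} j else 0)"
      using y by (auto simp: bvecs_def fun_eq_iff restrict_def)
    moreover have "restrict y {..<m} \<in> PiE {..<m} (\<lambda>_. {0,1::real})"
      using y by (auto simp: bvecs_def)
    ultimately show "y \<in> (\<lambda>g j. if j < m then g j else 0) ` (PiE {..<m} (\<lambda>_. {0,1::real}))"
      by blast
  qed
  moreover have "finite (PiE {..<m} (\<lambda>_. {0,1::real}))" by (intro finite_PiE) auto
  ultimately show ?thesis using finite_subset by blast
qed

lemma min_lemma: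
  fixes a :: "nat \<Rightarrow> real"
  shows "Min ((\<lambda>y. c + (\<Sum>k<m. a k * y k)) ` bvecs m) = c + (\<Sum>k<m. min 0 (a k))"
proof (rule Min_eqI)
  show "finite ((\<lambda>y. c + (\<Sum>k<m. a k * y k)) ` bvecs m)" using bvecs_finite by simp
next
  fix v assume "v \<in> (\<lambda>y. c + (\<Sum>k<m. a k * y k)) ` bvecs m"
  then obtain y where y: "y \<in> bvecs m" "v = c + (\<Sum>k<m. a k * y k)" by auto
  have "(\<Sum>k<m. min 0 (a k)) \<le> (\<Sum>k<m. a k * y k)"
  proof (rule sum_mono)
    fix k assume "k \<in> {..<m}"
    then have "y k = 0 \<or> y k = 1" using y(1) by (auto simp: bvecs_def)
    then show "min 0 (a k) \<le> a k * y k" by auto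
  qed
  then show "c + (\<Sum>k<m. min 0 (a k)) \<le> v" using y(2) by simp
next
  define y where "y k = (if k < m \<and> a k < 0 then 1 else 0 :: real)" for k
  have "y \<in> bvecs m" unfolding bvecs_def y_def by auto
  moreover have "(\<Sum>k<m. a k * y k) = (\<Sum>k<m. min 0 (a k))"
    by (rule sum.cong) (auto simp: y_def)
  ultimately show "c + (\<Sum>k<m. min 0 (a k)) \<in> (\<lambda>y. c + (\<Sum>k<m. a k * y k)) ` bvecs m"
    by (metis (no_types, lifting) image_eqI)
qed

lemma weight:
  assumes "x \<in> bvecs n"
  shows "(\<Sum>j<n. x j) = real (card {j\<in>{..<n}. x j = 1}) \<and> card {j\<in>{..<n}. x j = 1} \<le> n"
proof
  have "(\<Sum>j<n. x j) = (\<Sum>j<n. if x j = 1 then 1 else 0)"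
    by (rule sum.cong) (use assms in \<open>auto simp: bvecs_def\<close>)
  also have "\<dots> = (\<Sum>j\<in>{j\<in>{..<n}. x j = 1}. 1)"
    using sum.inter_filter[of "{..<n}" "\<lambda>_. 1::real" "\<lambda>j. x j = 1"] by simp
  finally show "(\<Sum>j<n. x j) = real (card {j\<in>{..<n}. x j = 1})" by simp
  have "card {j\<in>{..<n}. x j = 1} \<le> card {..<n}" by (intro card_mono) auto
  then show "card {j\<in>{..<n}. x j = 1} \<le> n" by simp
qed

lemma ind_vec:
  assumes "w \<le> n"
  shows "(\<lambda>j. if j < w then 1 else 0 :: real) \<in> bvecs n \<and> (\<Sum>j<n. (if j < w then 1 else 0 :: real)) = real w"
proof
  show "(\<lambda>j. if j < w then 1 else 0 :: real) \<in> bvecs n" using assms by (auto simp: bvecs_def)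
  have "(\<Sum>j<n. (if j < w then 1 else 0 :: real)) = (\<Sum>j\<in>{j\<in>{..<n}. j < w}. 1)"
    using sum.inter_filter[of "{..<n}" "\<lambda>_. 1::real" "\<lambda>j. j < w"] by simp
  also have "{j\<in>{..<n}. j < w} = {..<w}" using assms by auto
  finally show "(\<Sum>j<n. (if j < w then 1 else 0 :: real)) = real w" by simp
qed

theorem theorem4:
  fixes n :: nat and f :: "(nat \<Rightarrow> real) \<Rightarrow> real"
  assumes "n \<ge> 2" and "symmetric_pbf n f"
  shows "\<exists>m \<le> n - 2. has_ylinear_quadratization n m f"
proof -
  define F where "F w = f (\<lambda>j. if j < w then 1 else 0)" for w
  obtain A B C \<alpha> \<beta> where AB: "\<forall>w\<le>n. F w = A + B * real w + C * (real w)^2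
            + (\<Sum>k<n-2. min 0 (\<alpha> k + \<beta> k * real w))"
    using oneD[OF assms(1), of F] by blast
  have "has_ylinear_quadratization n (n-2) f"
    unfolding has_ylinear_quadratization_def
  proof (intro exI ballI)
    fix x assume x: "x \<in> bvecs n"
    define s where "s = (\<Sum>j<n. x j)"
    define w where "w = card {j\<in>{..<n}. x j = 1}"
    have sw: "s = real w" "w \<le> n" using weight[OF x] unfolding s_def w_def by auto
    have fx: "f x = F w" unfolding F_def using assms(2) x ind_vec[OF sw(2)] sw(1)
      unfolding symmetric_pbf_def s_def by metis
    have q1: "(\<Sum>i<n. B * x i) = B * s" unfolding s_def by (simp add: sum_distrib_left)
    have q2: "(\<Sum>i<n. \<Sum>j<n. C * x i * x j) = C * s^2"
    proof -
      have "C * s^2 = C * ((\<Sum>i<n. x i) * (\<Sum>j<n. x j))" unfolding s_def power2_eq_square ..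
      also have "\<dots> = (\<Sum>i<n. \<Sum>j<n. C * (x i * x j))"
        by (subst sum_product) (simp add: sum_distrib_left)
      finally show ?thesis by (simp add: mult.assoc)
    qed
    have q3: "(\<Sum>i<n. \<beta> k * x i) = \<beta> k * s" for k unfolding s_def by (simp add: sum_distrib_left)
    have "(\<lambda>y. ylin_poly n (n-2) A (\<lambda>_. B) (\<lambda>_ _. C) \<alpha> (\<lambda>k _. \<beta> k) x y)
        = (\<lambda>y. (A + B * s + C * s^2) + (\<Sum>k<n-2. (\<alpha> k + \<beta> k * s) * y k))"
      unfolding ylin_poly_def q1 q2 q3 by simp
    then have "Min ((\<lambda>y. ylin_poly n (n-2) A (\<lambda>_. B) (\<lambda>_ _. C) \<alpha> (\<lambda>k _. \<beta> k) x y) ` bvecs (n-2))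
        = (A + B * s + C * s^2) + (\<Sum>k<n-2. min 0 (\<alpha> k + \<beta> k * s))"
      using min_lemma[where a="\<lambda>k. \<alpha> k + \<beta> k * s" and c="A + B * s + C * s^2" and m="n-2"] by simp
    then show "f x = Min ((\<lambda>y. ylin_poly n (n-2) A (\<lambda>_. B) (\<lambda>_ _. C) \<alpha> (\<lambda>k _. \<beta> k) x y) ` bvecs (n-2))"
      using fx AB sw by simp
  qed
  then show ?thesis by blast
qed

end
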